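(* Let $s\ge 3$ be an integer. Then $$T_s=B_0\cup B_1\cup\cdots\cup B_{\lfloor s/2\rfloor-1},\qquad B_k=\{1+k(s+2),\,2+k(s+2),\,\ldots,\,(k+1)s-1\},$$ and $T_s$ is a graded poset of length $\lfloor s/2\rfloor-1$ whose elements of rank $k$ are exactly those of $B_k$. Moreover, for $1\le k\le\lfloor s/2\rfloor-1$, each element $b\in B_k$ covers exactly the three elements $b-s,\ b-(s+1),\ b-(s+2)$, all of which lie in $B_{k-1}$ (and the elements of $B_0$ are exactly the minimal elements).
   Context: For a positive integer $s$, $T_s=P_{(s,s+1,s+2)}$ denotes the set of positive integers that cannot be written as $k_1s+k_2(s+1)+k_3(s+2)$ with $k_1,k_2,k_3$ nonnegative integers, partially ordered by: $y\ge x$ iff there exist $y=y_0,y_1,\ldots,y_l=x$, all in $T_s$, with $y_i-y_{i+1}\in\{s,s+1,s+2\}$ for all $i$. For a poset, $y$ covers $x$ if $x<y$ and there is no $z$ with $x<z<y$. *)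

theory Defs
  imports Main
begin

definition repr3 :: "nat \<Rightarrow> nat \<Rightarrow> bool" where
  "repr3 s n \<longleftrightarrow> (\<exists>k1 k2 k3. n = k1 * s + k2 * (s + 1) + k3 * (s + 2))"

definition Tset :: "nat \<Rightarrow> nat set" where
  "Tset s = {n. 0 < n \<and> \<not> repr3 s n}"

definition Tstep :: "nat \<Rightarrow> nat \<Rightarrow> nat \<Rightarrow> bool" where
  "Tstep s y x \<longleftrightarrow> y \<in> Tset s \<and> x \<in> Tset s \<and>
     (y = x + s \<or> y = x + (s + 1) \<or> y = x + (s + 2))"

definition Tle :: "nat \<Rightarrow> nat \<Rightarrow> nat \<Rightarrow> bool" where
  "Tle s x y \<longleftrightarrow> x \<in> Tset s \<and> y \<in> Tset s \<and> (Tstep s)\<^sup>*\<^sup>* y x"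

definition Tlt :: "nat \<Rightarrow> nat \<Rightarrow> nat \<Rightarrow> bool" where
  "Tlt s x y \<longleftrightarrow> Tle s x y \<and> x \<noteq> y"

definition Trel :: "nat \<Rightarrow> (nat \<times> nat) set" where
  "Trel s = {(x, y). Tle s x y}"

definition Tcovers :: "nat \<Rightarrow> nat \<Rightarrow> nat \<Rightarrow> bool" where
  "Tcovers s y x \<longleftrightarrow> Tlt s x y \<and> \<not> (\<exists>z. Tlt s x z \<and> Tlt s z y)"

definition Tminimal :: "nat \<Rightarrow> nat \<Rightarrow> bool" where
  "Tminimal s x \<longleftrightarrow> x \<in> Tset s \<and> \<not> (\<exists>z. Tlt s z x)"

definition Tchain :: "nat \<Rightarrow> nat set \<Rightarrow> bool" where
  "Tchain s C \<longleftrightarrow> C \<subseteq> Tset s \<and> (\<forall>x\<in>C. \<forall>y\<in>C. Tle s x y \<or> Tle s y x)"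

definition Tmaxchain :: "nat \<Rightarrow> nat set \<Rightarrow> bool" where
  "Tmaxchain s C \<longleftrightarrow> Tchain s C \<and> \<not> (\<exists>D. Tchain s D \<and> C \<subset> D)"

text \<open>Graded of length L (every maximal chain is finite with L+1 elements, i.e. has
  length L) with rank function rho: minimal elements have rank 0 and ranks increase
  by one along cover relations.\<close>
definition graded_with_rank :: "nat \<Rightarrow> nat \<Rightarrow> (nat \<Rightarrow> nat) \<Rightarrow> bool" where
  "graded_with_rank s L \<rho> \<longleftrightarrow>
     (\<forall>C. Tmaxchain s C \<longrightarrow> finite C \<and> card C = L + 1) \<and>
     (\<forall>x. Tminimal s x \<longrightarrow> \<rho> x = 0) \<and>
     (\<forall>x y. Tcovers s y x \<longrightarrow> \<rho> y = \<rho> x + 1)"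

definition Bblock :: "nat \<Rightarrow> nat \<Rightarrow> nat set" where
  "Bblock s k = {1 + k * (s + 2) .. (k + 1) * s - 1}"

end

theory Submission
  imports Defs
begin

lemma repr3_iff: "repr3 s n \<longleftrightarrow> (\<exists>m. m*s \<le> n \<and> n \<le> m*(s+2))"
proof
  assume "repr3 s n"
  then obtain k1 k2 k3 where n: "n = k1*s + k2*(s+1) + k3*(s+2)" unfolding repr3_def by blast
  show "\<exists>m. m*s \<le> n \<and> n \<le> m*(s+2)"
    by (rule exI[of _ "k1+k2+k3"]) (simp add: n algebra_simps)
next
  assume "\<exists>m. m*s \<le> n \<and> n \<le> m*(s+2)"
  then obtain m where m: "m*s \<le> n" "n \<le> m*(s+2)" by blast
  define r where "r = n - m*s"
  have r: "r \<le> 2*m" "n = m*s + r" using m by (auto simp: r_def algebra_simps)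
  define a where "a = r div 2"
  define b where "b = r mod 2"
  have rab: "r = 2*a + b" "b \<le> 1" by (auto simp: a_def b_def)
  have "a + b \<le> m" using r(1) rab by linarith
  then obtain c where c: "m = c + a + b" by (intro that[of "m - a - b"]) simp
  show "repr3 s n" unfolding repr3_def
    by (rule exI[of _ c], rule exI[of _ b], rule exI[of _ a]) (simp add: r(2) rab c algebra_simps)
qed

lemma T_iff:
  assumes "s \<ge> 1"
  shows "n \<in> Tset s \<longleftrightarrow> 1 \<le> n mod (s+2) \<and> n mod (s+2) + 2*(n div (s+2)) + 1 \<le> s"
proof -
  define q where "q = n div (s+2)"
  define r where "r = n mod (s+2)"
  have n: "n = q*s + 2*q + r" using div_mult_mod_eq[of n "s+2"] by (simp add: q_def r_def algebra_simps)
  have rl: "r < s + 2" by (simp add: r_def)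
  show ?thesis unfolding q_def[symmetric] r_def[symmetric]
  proof
    assume T: "n \<in> Tset s"
    hence np: "n > 0" and nr: "\<not> (\<exists>m. m*s \<le> n \<and> n \<le> m*(s+2))"
      by (auto simp: Tset_def repr3_iff)
    have "r \<noteq> 0"
    proof
      assume "r = 0"
      hence "q*s \<le> n \<and> n \<le> q*(s+2)" using n by (simp add: algebra_simps)
      thus False using nr by blast
    qed
    moreover have "r + 2*q + 1 \<le> s"
    proof (rule ccontr)
      assume "\<not> ?thesis"
      hence "(q+1)*s \<le> n \<and> n \<le> (q+1)*(s+2)" using n rl by (simp add: algebra_simps)
      thus False using nr by blast
    qed
    ultimately show "1 \<le> r \<and> r + 2*q + 1 \<le> s" by simp
  next
    assume h: "1 \<le> r \<and> r + 2*q + 1 \<le> s"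
    have "\<not> repr3 s n"
    proof
      assume "repr3 s n"
      then obtain m where m: "m*s \<le> n" "n \<le> m*(s+2)" by (auto simp: repr3_iff)
      show False
      proof (cases "m \<le> q")
        case True
        hence "m*(s+2) \<le> q*(s+2)" by (rule mult_le_mono1)
        thus False using m n h by (simp add: algebra_simps)
      next
        case False
        hence "(q+1)*s \<le> m*s" by (intro mult_le_mono1) simp
        thus False using m n h by (simp add: algebra_simps)
      qed
    qed
    thus "n \<in> Tset s" using n h by (simp add: Tset_def)
  qed
qed

lemma B_iff:
  assumes "s \<ge> 1"
  shows "x \<in> Bblock s k \<longleftrightarrow> x \<in> Tset s \<and> x div (s+2) = k"
proof
  assume "x \<in> Bblock s k"
  hence b: "1 + k*s + 2*k \<le> x" "x + 1 \<le> k*s + s" using assms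
    by (auto simp: Bblock_def algebra_simps)
  have d: "x div (s+2) = k" by (rule div_nat_eqI) (use b in \<open>auto simp: algebra_simps\<close>)
  have m: "x mod (s+2) = x - (k*s + 2*k)" using d div_mult_mod_eq[of x "s+2"]
    by (simp add: algebra_simps)
  have "1 \<le> x mod (s+2) \<and> x mod (s+2) + 2*(x div (s+2)) + 1 \<le> s" using d m b by linarith
  thus "x \<in> Tset s \<and> x div (s+2) = k" using d by (simp add: T_iff[OF assms])
next
  assume h: "x \<in> Tset s \<and> x div (s+2) = k"
  have n: "x = k*s + 2*k + x mod (s+2)" using div_mult_mod_eq[of x "s+2"] h by (simp add: algebra_simps)
  have e: "(k+1)*s = k*s + s" "k*(s+2) = k*s+2*k" by (simp_all add: algebra_simps)
  have "1 + k*(s+2) \<le> x \<and> x \<le> (k+1)*s - 1" unfolding e using h n T_iff[OF assms, of x] by linarith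
  thus "x \<in> Bblock s k" by (simp add: Bblock_def)
qed

lemma step_rank:
  assumes s: "s \<ge> 1" and st: "Tstep s y x" shows "y div (s+2) = x div (s+2) + 1"
proof -
  define qx where "qx = x div (s+2)"
  define rx where "rx = x mod (s+2)"
  define qy where "qy = y div (s+2)"
  define ry where "ry = y mod (s+2)"
  have x: "x = qx*(s+2) + rx" using div_mult_mod_eq[of x "s+2"] by (simp add: qx_def rx_def)
  have y: "y = qy*(s+2) + ry" using div_mult_mod_eq[of y "s+2"] by (simp add: qy_def ry_def)
  have T: "1 \<le> rx" "rx + 2*qx+1 \<le> s" "1 \<le> ry" "ry + 2*qy + 1 \<le> s"
    using st T_iff[OF s, of x] T_iff[OF s, of y] unfolding Tstep_def qx_def rx_def qy_def ry_def by auto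
  have d: "y = x + s \<or> y = x+(s+1) \<or> y = x+(s+2)" using st by (auto simp: Tstep_def)
  consider "qy \<le> qx" | "qy = qx+1" | "qx + 2 \<le> qy" by linarith
  then have "qy = qx + 1"
  proof cases
    case 1 then have "qy*(s+2) \<le> qx*(s+2)" by (rule mult_le_mono1)
    then show ?thesis using x y T d by linarith
  next
    case 2 then show ?thesis .
  next
    case 3 then have "(qx+2)*(s+2) \<le> qy*(s+2)" by (rule mult_le_mono1)
    moreover have "(qx+2)*(s+2) = qx*(s+2) + 2*s + 4" by (simp add: algebra_simps)
    ultimately show ?thesis using x y T d by linarith
  qed
  thus ?thesis by (simp add: qx_def qy_def)
qed

lemma rt_rank:
  assumes s: "s \<ge> 1" and r: "(Tstep s)\<^sup>*\<^sup>* y x"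
  shows "x div (s+2) \<le> y div (s+2) \<and> (x div (s+2) = y div (s+2) \<longrightarrow> x = y)"
  using r
proof (induction rule: converse_rtranclp_induct)
  case base thus ?case by simp
next
  case (step y z) thus ?case using step_rank[OF s, of y z] by auto
qed

lemma Tle_rank: "s \<ge> 1 \<Longrightarrow> Tle s x y \<Longrightarrow> x div (s+2) \<le> y div (s+2) \<and> (x div (s+2) = y div (s+2) \<longrightarrow> x = y)"
  unfolding Tle_def using rt_rank by blast

lemma Tle_trans: "Tle s x y \<Longrightarrow> Tle s y z \<Longrightarrow> Tle s x z"
  unfolding Tle_def by (meson rtranclp_trans)

lemma Tle_refl: "x \<in> Tset s \<Longrightarrow> Tle s x x" by (simp add: Tle_def)

lemma Tstep_Tle: "Tstep s y x \<Longrightarrow> Tle s x y"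
  unfolding Tle_def by (auto simp: Tstep_def intro: r_into_rtranclp[of "Tstep s"])

lemma cmp_le: "s \<ge> 1 \<Longrightarrow> Tle s c a \<or> Tle s a c \<Longrightarrow> c div (s+2) \<le> a div (s+2) \<Longrightarrow> Tle s c a"
  using Tle_rank by (metis le_antisym)

lemma block_down:
  assumes s: "s \<ge> 1" and k: "1 \<le> k" and xB: "x \<in> Bblock s k" and d: "d \<in> {s, s+1, s+2}"
  shows "d \<le> x \<and> x - d \<in> Bblock s (k-1)"
proof -
  obtain j where kj: "k = Suc j" using k not0_implies_Suc by fastforce
  have b: "1 + k*(s+2) \<le> x" "x \<le> (k+1)*s - 1" using xB by (auto simp: Bblock_def)
  have e: "(k+1)*s = j*s + 2*s" "k*(s+2) = j*s+2*j+s+2" "(j+1)*s = j*s + s" "j*(s+2) = j*s+2*j"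
    by (simp_all add: kj algebra_simps)
  have "d \<le> x \<and> 1 + j*(s+2) \<le> x - d \<and> x - d \<le> (j+1)*s - 1" using b d s unfolding e by auto
  thus ?thesis by (simp add: Bblock_def kj)
qed

lemma block_up:
  assumes s: "s \<ge> 1" and xB: "x \<in> Bblock s k" and k: "2*k + 4 \<le> s"
  shows "\<exists>y \<in> Bblock s (k+1). Tstep s y x"
proof -
  have b: "1 + k*(s+2) \<le> x" "x \<le> (k+1)*s - 1" using xB by (auto simp: Bblock_def)
  have e: "(k+1)*s = k*s + s" "k*(s+2) = k*s+2*k" "(k+1+1)*s = k*s + 2*s" "(k+1)*(s+2) = k*s+2*k+s+2"
    by (simp_all add: algebra_simps)
  have b2: "1 + k*s + 2*k \<le> x" "x + 1 \<le> k*s + s" using b s unfolding e by auto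
  define y where "y = min (x+s+2) (k*s + 2*s - 1)"
  have y: "1 + k*s + s + 2*k + 2 \<le> y" "y + 1 \<le> k*s + 2*s" "x + s \<le> y" "y \<le> x+s+2"
    using b2 k by (auto simp: y_def)
  have yB: "y \<in> Bblock s (k+1)" unfolding Bblock_def using y e by simp
  have "y = x+s \<or> y = x+(s+1) \<or> y = x+(s+2)" using y by linarith
  thus ?thesis using yB xB B_iff[OF s] by (auto simp: Tstep_def)
qed

lemma down_exists:
  assumes s: "s \<ge> 1" and xT: "x \<in> Tset s" and k: "k \<le> x div (s+2)"
  shows "\<exists>z. z div (s+2) = k \<and> Tle s z x"
proof -
  obtain m where "x div (s+2) = k + m" using k le_Suc_ex by blast
  thus ?thesis using xT
  proof (induction m arbitrary: x)
    case 0 thus ?case using Tle_refl by auto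
  next
    case (Suc m)
    have xB: "x \<in> Bblock s (k + Suc m)" using Suc.prems B_iff[OF s] by auto
    have "s \<le> x \<and> x - s \<in> Bblock s (k+m)" using block_down[OF s _ xB, of s] by simp
    hence sx: "s \<le> x" and x': "x - s \<in> Tset s" "(x-s) div (s+2) = k+m" using B_iff[OF s] by auto
    obtain z where z: "z div (s+2) = k" "Tle s z (x-s)" using Suc.IH[OF x'(2) x'(1)] by blast
    have "Tstep s x (x-s)" using sx x' Suc.prems by (auto simp: Tstep_def)
    hence "Tle s (x-s) x" by (rule Tstep_Tle)
    thus ?case using z Tle_trans by blast
  qed
qed

lemma up_exists:
  assumes s: "s \<ge> 1" and xT: "x \<in> Tset s" and k: "x div (s+2) \<le> k" and kb: "2*k + 2 \<le> s"
  shows "\<exists>z. z div (s+2) = k \<and> Tle s x z"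
proof -
  obtain m where "k = x div (s+2) + m" using k le_Suc_ex by blast
  thus ?thesis using xT
  proof (induction m arbitrary: x)
    case 0 thus ?case using Tle_refl by auto
  next
    case (Suc m)
    have xB: "x \<in> Bblock s (x div (s+2))" using Suc.prems B_iff[OF s] by auto
    obtain y where yB: "y \<in> Bblock s (x div (s+2) + 1)" and st: "Tstep s y x"
      using block_up[OF s xB] Suc.prems kb by auto
    have y': "y \<in> Tset s" "y div (s+2) = x div (s+2) + 1" using yB B_iff[OF s] by auto
    obtain z where z: "z div (s+2) = k" "Tle s y z" using Suc.IH[OF _ y'(1)] y'(2) Suc.prems by auto
    thus ?case using Tstep_Tle[OF st] Tle_trans by blast
  qed
qed

lemma path_through:
  assumes s: "s \<ge> 1" and r: "(Tstep s)\<^sup>*\<^sup>* b a" and aT: "a \<in> Tset s"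
    and k1: "a div (s+2) \<le> k" and k2: "k \<le> b div (s+2)"
  shows "\<exists>z. z div (s+2) = k \<and> Tle s z b \<and> Tle s a z"
  using r k2
proof (induction rule: converse_rtranclp_induct)
  case base thus ?case using aT k1 Tle_refl by (intro exI[of _ a]) auto
next
  case (step y z)
  have ry: "y div (s+2) = z div (s+2) + 1" using step_rank[OF s step.hyps(1)] .
  show ?case
  proof (cases "k = y div (s+2)")
    case True
    have yT: "y \<in> Tset s" using step.hyps(1) by (auto simp: Tstep_def)
    have "(Tstep s)\<^sup>*\<^sup>* y a" using step.hyps by (meson converse_rtranclp_into_rtranclp)
    hence "Tle s a y" using aT yT by (simp add: Tle_def)
    thus ?thesis using True yT Tle_refl by blast
  next
    case False
    then have "k \<le> z div (s+2)" using ry step.prems by linarith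
    then obtain w where w: "w div (s+2) = k" "Tle s w z" "Tle s a w" using step.IH by blast
    have "Tle s z y" using step.hyps(1) Tstep_Tle by blast
    then show ?thesis using w Tle_trans by blast
  qed
qed

lemma covers_iff:
  assumes s: "s \<ge> 1" shows "Tcovers s y x \<longleftrightarrow> Tstep s y x"
proof
  assume c: "Tcovers s y x"
  hence lt: "Tle s x y" "x \<noteq> y" and nz: "\<not>(\<exists>z. Tlt s x z \<and> Tlt s z y)"
    by (auto simp: Tcovers_def Tlt_def)
  from lt have rt: "(Tstep s)\<^sup>*\<^sup>* y x" and xT: "x \<in> Tset s" by (auto simp: Tle_def)
  from rt show "Tstep s y x"
  proof (cases rule: converse_rtranclpE)
    case base with lt show ?thesis by simp
  next
    case (step z)
    show ?thesis
    proof (cases "z = x")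
      case True with step show ?thesis by simp
    next
      case False
      have zT: "z \<in> Tset s" using step(1) by (auto simp: Tstep_def)
      have "Tlt s x z" using False step(2) xT zT by (auto simp: Tlt_def Tle_def)
      moreover have "Tlt s z y" using step(1) step_rank[OF s step(1)] Tstep_Tle by (auto simp: Tlt_def)
      ultimately show ?thesis using nz by blast
    qed
  qed
next
  assume st: "Tstep s y x"
  have r: "y div (s+2) = x div (s+2) + 1" using step_rank[OF s st] .
  have "Tlt s x y" using st r Tstep_Tle by (auto simp: Tlt_def)
  moreover have "\<not>(\<exists>z. Tlt s x z \<and> Tlt s z y)"
  proof
    assume "\<exists>z. Tlt s x z \<and> Tlt s z y"
    then obtain z where z: "Tle s x z" "x\<noteq>z" "Tle s z y" "z \<noteq> y" by (auto simp: Tlt_def)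
    have "x div (s+2) < z div (s+2)" using Tle_rank[OF s z(1)] z(2) by auto
    moreover have "z div (s+2) < y div (s+2)" using Tle_rank[OF s z(3)] z(4) by auto
    ultimately show False using r by linarith
  qed
  ultimately show "Tcovers s y x" by (simp add: Tcovers_def)
qed

lemma minimal_iff:
  assumes s: "s \<ge> 1" shows "Tminimal s x \<longleftrightarrow> x \<in> Bblock s 0"
proof
  assume m: "Tminimal s x"
  hence xT: "x \<in> Tset s" and nz: "\<not>(\<exists>z. Tlt s z x)" by (auto simp: Tminimal_def)
  show "x \<in> Bblock s 0"
  proof (rule ccontr)
    assume "x \<notin> Bblock s 0"
    hence k: "1 \<le> x div (s+2)" using xT B_iff[OF s] by auto
    have xB: "x \<in> Bblock s (x div (s+2))" using xT B_iff[OF s] by auto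
    from block_down[OF s k xB, of s] have sx: "s \<le> x" and x': "x - s \<in> Tset s"
      using B_iff[OF s] by auto
    have "Tstep s x (x - s)" using xT x' sx by (auto simp: Tstep_def)
    hence "Tlt s (x-s) x" using Tstep_Tle s sx by (auto simp: Tlt_def)
    thus False using nz by blast
  qed
next
  assume "x \<in> Bblock s 0"
  hence xT: "x \<in> Tset s" "x div (s+2) = 0" using B_iff[OF s] by auto
  have "\<not> Tlt s z x" for z
  proof
    assume "Tlt s z x"
    hence "Tle s z x" "z \<noteq> x" by (auto simp: Tlt_def)
    thus False using Tle_rank[OF s, of z x] xT(2) by auto
  qed
  thus "Tminimal s x" unfolding Tminimal_def using xT by blast
qed

lemma rk_bound: "s \<ge> 1 \<Longrightarrow> x \<in> Tset s \<Longrightarrow> 2*(x div (s+2)) + 2 \<le> s"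
  using T_iff by fastforce

lemma fill:
  assumes s3: "s \<ge> 3" and ch: "Tchain s C" and k: "2*k+2 \<le> s" and nk: "\<forall>c\<in>C. c div (s+2) \<noteq> k"
  shows "\<exists>z \<in> Tset s. z div (s+2) = k \<and> (\<forall>c\<in>C. Tle s c z \<or> Tle s z c)"
proof -
  have s: "s \<ge> 1" using s3 by simp
  have CT: "C \<subseteq> Tset s" and cmp: "\<forall>x\<in>C. \<forall>y\<in>C. Tle s x y \<or> Tle s y x"
    using ch by (auto simp: Tchain_def)
  define A where "A = {c\<in>C. c div (s+2) < k}"
  define U where "U = {c\<in>C. k < c div (s+2)}"
  have CAU: "C = A \<union> U" using nk by (auto simp: A_def U_def)
  obtain a where a: "A \<noteq> {} \<longrightarrow> a \<in> A \<and> (\<forall>c\<in>A. c div (s+2) \<le> a div (s+2))"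
  proof (cases "A = {}")
    case True thus ?thesis using that by blast
  next
    case False
    then obtain a0 where "a0 \<in> A" by blast
    from ex_has_least_nat[of "\<lambda>c. c \<in> A" a0 "\<lambda>c. k - c div (s+2)", OF this]
    obtain a where "a \<in> A" "\<forall>c. c \<in> A \<longrightarrow> k - a div (s+2) \<le> k - c div (s+2)" by blast
    moreover have "\<forall>c\<in>A. c div (s+2) < k" by (auto simp: A_def)
    ultimately show ?thesis using that[of a] by force
  qed
  obtain b where b: "U \<noteq> {} \<longrightarrow> b \<in> U \<and> (\<forall>c\<in>U. b div (s+2) \<le> c div (s+2))"
  proof (cases "U = {}")
    case True thus ?thesis using that by blast
  next
    case False
    then obtain b0 where "b0 \<in> U" by blast
    from ex_has_least_nat[of "\<lambda>c. c \<in> U" b0 "\<lambda>c. c div (s+2)", OF this]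
    show ?thesis using that by blast
  qed
  have ex: "\<exists>z. z div (s+2) = k \<and> z \<in> Tset s \<and> (A \<noteq> {} \<longrightarrow> Tle s a z) \<and> (U \<noteq> {} \<longrightarrow> Tle s z b)"
  proof (cases "A = {}")
    case True
    show ?thesis
    proof (cases "U = {}")
      case True
      have oT: "1 \<in> Tset s" using T_iff[OF s, of 1] s3 by simp
      obtain z where "z div (s+2) = k" "Tle s 1 z" using up_exists[OF s oT _ k] by auto
      thus ?thesis using \<open>A = {}\<close> True by (auto simp: Tle_def)
    next
      case False
      hence bU: "b \<in> U" using b by blast
      hence "b \<in> Tset s" "k \<le> b div (s+2)" using CT by (auto simp: U_def)
      then obtain z where "z div (s+2) = k" "Tle s z b" using down_exists[OF s] by blast
      thus ?thesis using \<open>A = {}\<close> by (auto simp: Tle_def)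
    qed
  next
    case False
    hence aA: "a \<in> A" using a by blast
    hence aT: "a \<in> Tset s" "a div (s+2) \<le> k" using CT by (auto simp: A_def)
    show ?thesis
    proof (cases "U = {}")
      case True
      obtain z where "z div (s+2) = k" "Tle s a z" using up_exists[OF s aT k] by auto
      thus ?thesis using True by (auto simp: Tle_def)
    next
      case False
      hence bU: "b \<in> U" using b by blast
      have "Tle s a b" using cmp_le[OF s, of a b] cmp aA bU by (auto simp: A_def U_def)
      hence "(Tstep s)\<^sup>*\<^sup>* b a" by (simp add: Tle_def)
      then obtain z where "z div (s+2) = k" "Tle s z b" "Tle s a z"
        using path_through[OF s _ aT(1) aT(2)] bU by (fastforce simp: U_def)
      thus ?thesis by (auto simp: Tle_def)
    qed
  qed
  then obtain z where z: "z div (s+2) = k" "z \<in> Tset s" "A \<noteq> {} \<longrightarrow> Tle s a z" "U \<noteq> {} \<longrightarrow> Tle s z b"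
    by blast
  have "\<forall>c\<in>C. Tle s c z \<or> Tle s z c"
  proof
    fix c assume cC: "c \<in> C"
    show "Tle s c z \<or> Tle s z c"
    proof (cases "c \<in> A")
      case True
      hence "a \<in> A" "c div (s+2) \<le> a div (s+2)" using a by blast+
      hence "Tle s c a" using cmp_le[OF s] cmp cC by (auto simp: A_def)
      thus ?thesis using z(3) True Tle_trans by blast
    next
      case False
      hence cU: "c \<in> U" using CAU cC by blast
      hence "b \<in> U" "b div (s+2) \<le> c div (s+2)" using b by blast+
      hence "Tle s b c" using cmp_le[OF s] cmp cC by (auto simp: U_def)
      thus ?thesis using z(4) cU Tle_trans by blast
    qed
  qed
  thus ?thesis using z by blast
qed

lemma maxchain_card:
  assumes s3: "s \<ge> 3" and mc: "Tmaxchain s C"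
  shows "finite C \<and> card C = s div 2 - 1 + 1"
proof -
  have s: "s \<ge> 1" using s3 by simp
  have ch: "Tchain s C" and nmax: "\<not>(\<exists>D. Tchain s D \<and> C \<subset> D)" using mc by (auto simp: Tmaxchain_def)
  have CT: "C \<subseteq> Tset s" and cmp: "\<forall>x\<in>C. \<forall>y\<in>C. Tle s x y \<or> Tle s y x"
    using ch by (auto simp: Tchain_def)
  let ?r = "\<lambda>x. x div (s+2)"
  have inj: "inj_on ?r C"
  proof (rule inj_onI)
    fix x y assume "x \<in> C" "y \<in> C" "?r x = ?r y"
    thus "x = y" using cmp Tle_rank[OF s, of x y] Tle_rank[OF s, of y x] by auto
  qed
  have img: "?r ` C = {0..s div 2 - 1}"
  proof
    show "?r ` C \<subseteq> {0..s div 2 - 1}"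
    proof
      fix k assume "k \<in> ?r ` C"
      then obtain x where "x \<in> C" "k = ?r x" by blast
      hence "2*k + 2 \<le> s" using rk_bound[OF s] CT by blast
      thus "k \<in> {0..s div 2 - 1}" by (simp; presburger)
    qed
  next
    show "{0..s div 2 - 1} \<subseteq> ?r ` C"
    proof
      fix k assume "k \<in> {0..s div 2 - 1}"
      hence k: "2*k+2 \<le> s" using s3 by (simp; presburger)
      show "k \<in> ?r ` C"
      proof (rule ccontr)
        assume "k \<notin> ?r ` C"
        hence nk: "\<forall>c\<in>C. ?r c \<noteq> k" by force
        obtain z where z: "z \<in> Tset s" "?r z = k" "\<forall>c\<in>C. Tle s c z \<or> Tle s z c"
          using fill[OF s3 ch k nk] by blast
        have "Tchain s (insert z C)" using z CT cmp Tle_refl unfolding Tchain_def by blast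
        moreover have "C \<subset> insert z C" using z nk by blast
        ultimately show False using nmax by blast
      qed
    qed
  qed
  have fin: "finite C" using img by (metis finite_atLeastAtMost finite_imageD inj)
  have "card C = card {0..s div 2 - 1}" using card_image[OF inj] img by simp
  thus ?thesis using fin by simp
qed

theorem theorem2p3:
  fixes s :: nat
  assumes "s \<ge> 3"
  shows "Tset s = (\<Union>k \<in> {0 .. s div 2 - 1}. Bblock s k)
    \<and> partial_order_on (Tset s) (Trel s)
    \<and> (\<exists>\<rho>. graded_with_rank s (s div 2 - 1) \<rho>
          \<and> (\<forall>k. \<forall>x \<in> Tset s. \<rho> x = k \<longleftrightarrow> x \<in> Bblock s k))
    \<and> (\<forall>k b. 1 \<le> k \<and> k \<le> s div 2 - 1 \<and> b \<in> Bblock s k \<longrightarrow>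
          {x. Tcovers s b x} = {b - s, b - (s + 1), b - (s + 2)}
          \<and> {b - s, b - (s + 1), b - (s + 2)} \<subseteq> Bblock s (k - 1))
    \<and> {x. Tminimal s x} = Bblock s 0"
proof (intro conjI)
  have s: "s \<ge> 1" using assms by simp
  show "Tset s = (\<Union>k \<in> {0 .. s div 2 - 1}. Bblock s k)"
  proof
    show "Tset s \<subseteq> (\<Union>k \<in> {0 .. s div 2 - 1}. Bblock s k)"
    proof
      fix x assume xT: "x \<in> Tset s"
      have "2*(x div (s+2)) + 2 \<le> s" using rk_bound[OF s xT] .
      hence "x div (s+2) \<in> {0 .. s div 2 - 1}" by (simp; presburger)
      moreover have "x \<in> Bblock s (x div (s+2))" using xT B_iff[OF s] by blast
      ultimately show "x \<in> (\<Union>k \<in> {0 .. s div 2 - 1}. Bblock s k)" by blast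
    qed
    show "(\<Union>k \<in> {0 .. s div 2 - 1}. Bblock s k) \<subseteq> Tset s" using B_iff[OF s] by blast
  qed
  show "partial_order_on (Tset s) (Trel s)"
    unfolding partial_order_on_def preorder_on_def
  proof (intro conjI refl_onI transI antisymI)
    show "Trel s \<subseteq> Tset s \<times> Tset s" by (auto simp: Trel_def Tle_def)
    show "\<And>x. x \<in> Tset s \<Longrightarrow> (x, x) \<in> Trel s" by (simp add: Trel_def Tle_refl)
    show "\<And>x y z. (x, y) \<in> Trel s \<Longrightarrow> (y, z) \<in> Trel s \<Longrightarrow> (x, z) \<in> Trel s"
      by (auto simp: Trel_def intro: Tle_trans)
    fix x y assume "(x, y) \<in> Trel s" "(y, x) \<in> Trel s"
    hence "Tle s x y" "Tle s y x" by (auto simp: Trel_def)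
    thus "x = y" using Tle_rank[OF s, of x y] Tle_rank[OF s, of y x] by auto
  qed
  show "\<exists>\<rho>. graded_with_rank s (s div 2 - 1) \<rho>
          \<and> (\<forall>k. \<forall>x \<in> Tset s. \<rho> x = k \<longleftrightarrow> x \<in> Bblock s k)"
  proof (rule exI[of _ "\<lambda>x. x div (s+2)"], intro conjI)
    show "graded_with_rank s (s div 2 - 1) (\<lambda>x. x div (s+2))"
      unfolding graded_with_rank_def
      using maxchain_card[OF assms] minimal_iff[OF s] B_iff[OF s] covers_iff[OF s] step_rank[OF s]
      by blast
    show "\<forall>k. \<forall>x \<in> Tset s. x div (s+2) = k \<longleftrightarrow> x \<in> Bblock s k" using B_iff[OF s] by blast
  qed
  show "\<forall>k b. 1 \<le> k \<and> k \<le> s div 2 - 1 \<and> b \<in> Bblock s k \<longrightarrow>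
          {x. Tcovers s b x} = {b - s, b - (s + 1), b - (s + 2)}
          \<and> {b - s, b - (s + 1), b - (s + 2)} \<subseteq> Bblock s (k - 1)"
  proof (intro allI impI)
    fix k b assume h: "1 \<le> k \<and> k \<le> s div 2 - 1 \<and> b \<in> Bblock s k"
    have d: "\<And>d. d \<in> {s, s+1, s+2} \<Longrightarrow> d \<le> b \<and> b - d \<in> Bblock s (k-1)"
      using block_down[OF s] h by blast
    have bT: "b \<in> Tset s" using h B_iff[OF s] by blast
    have sub: "{b - s, b - (s + 1), b - (s + 2)} \<subseteq> Bblock s (k - 1)" using d by auto
    have "{x. Tcovers s b x} = {b - s, b - (s + 1), b - (s + 2)}"
    proof (intro set_eqI iffI)
      fix x assume "x \<in> {x. Tcovers s b x}"
      hence "Tstep s b x" using covers_iff[OF s] by blast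
      thus "x \<in> {b - s, b - (s + 1), b - (s + 2)}" by (auto simp: Tstep_def)
    next
      fix x assume x: "x \<in> {b - s, b - (s + 1), b - (s + 2)}"
      hence xT: "x \<in> Tset s" using sub B_iff[OF s] by blast
      have le: "s \<le> b" "s+1 \<le> b" "s+2 \<le> b" using d by auto
      have "b = x + s \<or> b = x + (s+1) \<or> b = x + (s+2)" using x le by auto
      hence "Tstep s b x" using xT bT by (simp add: Tstep_def)
      thus "x \<in> {x. Tcovers s b x}" using covers_iff[OF s] by blast
    qed
    thus "{x. Tcovers s b x} = {b - s, b - (s + 1), b - (s + 2)}
          \<and> {b - s, b - (s + 1), b - (s + 2)} \<subseteq> Bblock s (k - 1)" using sub by blast
  qed
  show "{x. Tminimal s x} = Bblock s 0" using minimal_iff[OF s] by blast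
qed

end
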